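(* Let $G$ be an undirected graph on $n$ vertices with nonnegative edge weights, let $0<\epsilon<1$, and let $\widehat{G}$ be an $\epsilon$-spectral sparsifier of $G$. Let $\mu_1\geq\cdots\geq\mu_n$ be the eigenvalues of $L_G$ with respective eigenvectors $x_1,\dots,x_n$, and let $\widehat{\mu}_1\geq\cdots\geq\widehat{\mu}_n$ be the eigenvalues of $L_{\widehat{G}}$ with respective eigenvectors $\widehat{x}_1,\dots,\widehat{x}_n$. Then 1. $\|L_G-L_{\widehat{G}}\|\leq\epsilon\,\rho(L_G)$, and 2. if $\theta_i$ is the angle between $x_i$ and $\widehat{x}_i$, then \[ \sin\theta_i\leq\frac{\epsilon\,\rho(L_G)}{\min\{|\mu_i-\widehat{\mu}_{i-1}|,\ |\mu_i-\widehat{\mu}_{i+1}|\}}, \] where it is assumed that $|\mu_i-\widehat{\mu}_{i\pm1}|\neq 0$ for all $i=1,\dots,n$.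
   Context: For a simple undirected graph $G$ on vertices $v_1,\dots,v_n$ with edge weights $w_{ij}\geq 0$ (and $w_{ij}=0$ for non-edges), the adjacency matrix is $(A_G)_{ij}=w_{ij}$ for $i\neq j$, $(A_G)_{ii}=0$; the degree matrix $D_G$ is diagonal with $(D_G)_{ii}=\sum_j w_{ij}$; the Laplacian is $L_G=D_G-A_G$. For $\epsilon\in(0,1)$, a weighted graph $\widehat{G}$ on the same vertex set is an $\epsilon$-spectral sparsifier of $G$ if $(1-\epsilon)x^TL_Gx\leq x^TL_{\widehat{G}}x\leq(1+\epsilon)x^TL_Gx$ for all $x\in\mathbb{R}^n$. $\|\cdot\|$ is the spectral (2-)norm and $\rho(\cdot)$ the spectral radius. For the boundary indices the conventions $\widehat{\mu}_0=+\infty$, $\widehat{\mu}_{n+1}=-\infty$ are used. *)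

theory Defs
  imports "HOL-Analysis.Analysis"
begin

text \<open>Weighted graphs on the vertex type 'n (finite): weight function w, with
  w i j the weight of edge {i,j} (0 for non-edges).\<close>

definition weighted_graph :: "('n::finite \<Rightarrow> 'n \<Rightarrow> real) \<Rightarrow> bool" where
  "weighted_graph w \<longleftrightarrow> (\<forall>i j. w i j \<ge> 0) \<and> (\<forall>i j. w i j = w j i) \<and> (\<forall>i. w i i = 0)"

definition adj_matrix :: "('n::finite \<Rightarrow> 'n \<Rightarrow> real) \<Rightarrow> real^'n^'n" where
  "adj_matrix w = (\<chi> i j. if i = j then 0 else w i j)"

definition deg_matrix :: "('n::finite \<Rightarrow> 'n \<Rightarrow> real) \<Rightarrow> real^'n^'n" where
  "deg_matrix w = (\<chi> i j. if i = j then (\<Sum>k\<in>UNIV. w i k) else 0)"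

definition laplacian :: "('n::finite \<Rightarrow> 'n \<Rightarrow> real) \<Rightarrow> real^'n^'n" where
  "laplacian w = deg_matrix w - adj_matrix w"

definition spectral_sparsifier ::
  "real \<Rightarrow> ('n::finite \<Rightarrow> 'n \<Rightarrow> real) \<Rightarrow> ('n \<Rightarrow> 'n \<Rightarrow> real) \<Rightarrow> bool" where
  "spectral_sparsifier \<epsilon> w wh \<longleftrightarrow> weighted_graph wh \<and>
     (\<forall>x::real^'n. (1 - \<epsilon>) * (x \<bullet> (laplacian w *v x)) \<le> x \<bullet> (laplacian wh *v x) \<and>
                    x \<bullet> (laplacian wh *v x) \<le> (1 + \<epsilon>) * (x \<bullet> (laplacian w *v x)))"

definition spec_norm :: "real^'n::finite^'m::finite \<Rightarrow> real" where
  "spec_norm A = onorm (\<lambda>x. A *v x)"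

text \<open>Eigenvalues and spectral radius (for real matrices, real eigenvalues; for the
  symmetric matrices considered here all eigenvalues are real).\<close>
definition is_eigenvalue :: "real^'n::finite^'n \<Rightarrow> real \<Rightarrow> bool" where
  "is_eigenvalue A c \<longleftrightarrow> (\<exists>x. x \<noteq> 0 \<and> A *v x = c *\<^sub>R x)"

definition spec_radius :: "real^'n::finite^'n \<Rightarrow> real" where
  "spec_radius A = Max {\<bar>c\<bar> | c. is_eigenvalue A c}"

definition vec_angle :: "'a::real_inner \<Rightarrow> 'a \<Rightarrow> real" where
  "vec_angle x y = arccos ((x \<bullet> y) / (norm x * norm y))"

definition ext_eig :: "nat \<Rightarrow> (nat \<Rightarrow> real) \<Rightarrow> nat \<Rightarrow> ereal" where
  "ext_eig n \<mu> i = (if i = 0 then \<infinity> else if i = n + 1 then -\<infinity> else ereal (\<mu> i))"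

text \<open>mu_1 >= ... >= mu_n, with eigenvectors x_1..x_n forming a basis
  (so the mu_i are all eigenvalues, counted with multiplicity).\<close>
definition eigen_decomp :: "real^'n::finite^'n \<Rightarrow> (nat \<Rightarrow> real) \<Rightarrow> (nat \<Rightarrow> real^'n) \<Rightarrow> bool" where
  "eigen_decomp A \<mu> x \<longleftrightarrow>
     (\<forall>i\<in>{1..CARD('n)}. x i \<noteq> 0 \<and> A *v x i = \<mu> i *\<^sub>R x i) \<and>
     (\<forall>i j. 1 \<le> i \<longrightarrow> i \<le> j \<longrightarrow> j \<le> CARD('n) \<longrightarrow> \<mu> j \<le> \<mu> i) \<and>
     inj_on x {1..CARD('n)} \<and> independent (x ` {1..CARD('n)})"

end

theory Submission
  imports Defs
begin



lemma symm_inner: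
  fixes A :: "real^'n::finite^'n"
  assumes "transpose A = A"
  shows "(A *v x) \<bullet> y = x \<bullet> (A *v y)"
proof -
  have "(A *v x) \<bullet> y = y \<bullet> (A *v x)" by (simp add: inner_commute)
  also have "\<dots> = (y v* A) \<bullet> x" by (simp add: dot_lmul_matrix)
  also have "y v* A = transpose A *v y" by (simp add: transpose_matrix_vector)
  finally show ?thesis using assms by (simp add: inner_commute)
qed

lemma eig_orth:
  fixes A :: "real^'n::finite^'n"
  assumes "transpose A = A" "A *v a = \<alpha> *\<^sub>R a" "A *v b = \<beta> *\<^sub>R b" "\<alpha> \<noteq> \<beta>"
  shows "a \<bullet> b = 0"
proof -
  have "\<alpha> * (a \<bullet> b) = (A *v a) \<bullet> b" using assms by simp
  also have "\<dots> = a \<bullet> (A *v b)" by (rule symm_inner[OF assms(1)])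
  also have "\<dots> = \<beta> * (a \<bullet> b)" using assms by simp
  finally show ?thesis using assms(4) by simp
qed

lemma quad_nonneg:
  fixes a :: "'j \<Rightarrow> 'v::real_inner"
  assumes "finite J" "\<And>j k. j \<in> J \<Longrightarrow> k \<in> J \<Longrightarrow> a j \<bullet> a k \<noteq> 0 \<Longrightarrow> \<alpha> j = \<alpha> k"
    "\<And>j. j \<in> J \<Longrightarrow> \<phi> (\<alpha> j) \<ge> 0"
  shows "0 \<le> (\<Sum>j\<in>J. \<Sum>k\<in>J. c j * c k * \<phi> (\<alpha> k) * (a j \<bullet> a k))"
proof -
  define s where "s = (\<lambda>j. sqrt (\<phi> (\<alpha> j)))"
  define w where "w = (\<Sum>j\<in>J. (c j * s j) *\<^sub>R a j)"
  have "w \<bullet> w = (\<Sum>j\<in>J. \<Sum>k\<in>J. (c j * s j) * (c k * s k) * (a j \<bullet> a k))"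
    unfolding w_def inner_sum_left by (simp add: inner_sum_right sum_distrib_left mult_ac)
  also have "\<dots> = (\<Sum>j\<in>J. \<Sum>k\<in>J. c j * c k * \<phi> (\<alpha> k) * (a j \<bullet> a k))"
  proof (intro sum.cong refl)
    fix j k assume jk: "j \<in> J" "k \<in> J"
    show "(c j * s j) * (c k * s k) * (a j \<bullet> a k) = c j * c k * \<phi> (\<alpha> k) * (a j \<bullet> a k)"
    proof (cases "a j \<bullet> a k = 0")
      case False
      then have "\<alpha> j = \<alpha> k" using assms(2) jk by blast
      then have "s j * s k = \<phi> (\<alpha> k)" unfolding s_def using assms(3)[OF jk(2)]
        by simp
      then show ?thesis by (metis mult.commute mult.left_commute)
    qed simp
  qed
  finally show ?thesis by (metis inner_ge_zero)
qed

lemma sum_inner_expand: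
  fixes a :: "'j \<Rightarrow> 'v::real_inner"
  shows "(\<Sum>j\<in>J. x j *\<^sub>R a j) \<bullet> (\<Sum>k\<in>J. y k *\<^sub>R a k) = (\<Sum>j\<in>J. \<Sum>k\<in>J. x j * y k * (a j \<bullet> a k))"
  unfolding inner_sum_left by (simp add: inner_sum_right sum_distrib_left mult_ac)

lemma mat_sum_eig:
  fixes A :: "real^'n::finite^'n"
  assumes "\<And>j. j \<in> J \<Longrightarrow> A *v a j = \<alpha> j *\<^sub>R a j"
  shows "A *v (\<Sum>j\<in>J. c j *\<^sub>R a j) = (\<Sum>j\<in>J. (c j * \<alpha> j) *\<^sub>R a j)"
  unfolding vec.sum by (intro sum.cong refl) (simp add: matrix_vector_mult_scaleR assms)

lemma rayleigh_lower:
  fixes A :: "real^'n::finite^'n"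
  assumes sym: "transpose A = A" and fin: "finite J"
    and eig: "\<And>j. j \<in> J \<Longrightarrow> A *v a j = \<alpha> j *\<^sub>R a j"
    and ge: "\<And>j. j \<in> J \<Longrightarrow> m \<le> \<alpha> j"
    and v: "v = (\<Sum>j\<in>J. c j *\<^sub>R a j)"
  shows "m * (v \<bullet> v) \<le> v \<bullet> (A *v v)"
proof -
  have orth: "\<And>j k. j \<in> J \<Longrightarrow> k \<in> J \<Longrightarrow> a j \<bullet> a k \<noteq> 0 \<Longrightarrow> \<alpha> j = \<alpha> k"
    using eig_orth[OF sym] eig by blast
  have "v \<bullet> (A *v v) - m * (v \<bullet> v) =
     (\<Sum>j\<in>J. \<Sum>k\<in>J. c j * (c k * \<alpha> k) * (a j \<bullet> a k)) - (\<Sum>j\<in>J. \<Sum>k\<in>J. m * (c j * c k * (a j \<bullet> a k)))"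
  proof -
    have Av: "A *v v = (\<Sum>j\<in>J. (c j * \<alpha> j) *\<^sub>R a j)" unfolding v by (rule mat_sum_eig[OF eig])
    show ?thesis unfolding Av unfolding v sum_inner_expand by (simp add: sum_distrib_left)
  qed
  also have "\<dots> = (\<Sum>j\<in>J. \<Sum>k\<in>J. c j * c k * (\<lambda>t. t - m) (\<alpha> k) * (a j \<bullet> a k))"
    by (simp add: sum_subtractf[symmetric] algebra_simps)
  also have "\<dots> \<ge> 0" by (rule quad_nonneg[OF fin orth]) (use ge in auto)
  finally show ?thesis by simp
qed

lemma resid_lower:
  fixes A :: "real^'n::finite^'n"
  assumes sym: "transpose A = A" and fin: "finite J"
    and eig: "\<And>j. j \<in> J \<Longrightarrow> A *v a j = \<alpha> j *\<^sub>R a j"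
    and ge: "\<And>j. j \<in> J \<Longrightarrow> g\<^sup>2 \<le> (\<alpha> j - \<mu>)\<^sup>2"
    and v: "v = (\<Sum>j\<in>J. c j *\<^sub>R a j)"
  shows "g\<^sup>2 * (v \<bullet> v) \<le> (A *v v - \<mu> *\<^sub>R v) \<bullet> (A *v v - \<mu> *\<^sub>R v)"
proof -
  have orth: "\<And>j k. j \<in> J \<Longrightarrow> k \<in> J \<Longrightarrow> a j \<bullet> a k \<noteq> 0 \<Longrightarrow> \<alpha> j = \<alpha> k"
    using eig_orth[OF sym] eig by blast
  have r: "A *v v - \<mu> *\<^sub>R v = (\<Sum>j\<in>J. (c j * (\<alpha> j - \<mu>)) *\<^sub>R a j)"
  proof -
    have Av: "A *v v = (\<Sum>j\<in>J. (c j * \<alpha> j) *\<^sub>R a j)" unfolding v by (rule mat_sum_eig[OF eig])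
    show ?thesis unfolding Av unfolding v scaleR_sum_right sum_subtractf[symmetric]
      by (intro sum.cong refl) (simp add: algebra_simps)
  qed
  have "(A *v v - \<mu> *\<^sub>R v) \<bullet> (A *v v - \<mu> *\<^sub>R v) - g\<^sup>2 * (v \<bullet> v) =
     (\<Sum>j\<in>J. \<Sum>k\<in>J. (c j * (\<alpha> j - \<mu>)) * (c k * (\<alpha> k - \<mu>)) * (a j \<bullet> a k)) - (\<Sum>j\<in>J. \<Sum>k\<in>J. g\<^sup>2 * (c j * c k * (a j \<bullet> a k)))"
    unfolding r unfolding v sum_inner_expand by (simp add: sum_distrib_left)
  also have "\<dots> = (\<Sum>j\<in>J. \<Sum>k\<in>J. c j * c k * (\<lambda>t. (t - \<mu>)\<^sup>2 - g\<^sup>2) (\<alpha> k) * (a j \<bullet> a k))"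
    unfolding sum_subtractf[symmetric]
  proof (intro sum.cong refl)
    fix j k assume jk: "j \<in> J" "k \<in> J"
    show "c j * (\<alpha> j - \<mu>) * (c k * (\<alpha> k - \<mu>)) * (a j \<bullet> a k) - g\<^sup>2 * (c j * c k * (a j \<bullet> a k)) =
       c j * c k * (\<lambda>t. (t - \<mu>)\<^sup>2 - g\<^sup>2) (\<alpha> k) * (a j \<bullet> a k)"
    proof (cases "a j \<bullet> a k = 0")
      case False
      then have "\<alpha> j = \<alpha> k" using orth jk by blast
      then show ?thesis by (simp add: algebra_simps power2_eq_square)
    qed simp
  qed
  also have "\<dots> \<ge> 0" by (rule quad_nonneg[OF fin orth]) (use ge in auto)
  finally show ?thesis by simp
qed

lemma span_repr:
  fixes a :: "'j \<Rightarrow> 'v::real_vector"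
  assumes "finite J" "inj_on a J" "v \<in> span (a ` J)"
  shows "\<exists>c. v = (\<Sum>j\<in>J. c j *\<^sub>R a j)"
proof -
  obtain u where "v = (\<Sum>w\<in>a ` J. u w *\<^sub>R w)"
    using assms(3) span_finite[of "a ` J"] assms(1) by auto
  also have "\<dots> = (\<Sum>j\<in>J. u (a j) *\<^sub>R a j)" by (simp add: sum.reindex assms(2))
  finally show ?thesis by (rule exI[where x="\<lambda>j. u (a j)"])
qed

lemma rayleigh_upper:
  fixes A :: "real^'n::finite^'n"
  assumes sym: "transpose A = A" and fin: "finite J"
    and eig: "\<And>j. j \<in> J \<Longrightarrow> A *v a j = \<alpha> j *\<^sub>R a j"
    and le: "\<And>j. j \<in> J \<Longrightarrow> \<alpha> j \<le> M"
    and v: "v = (\<Sum>j\<in>J. c j *\<^sub>R a j)"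
  shows "v \<bullet> (A *v v) \<le> M * (v \<bullet> v)"
proof -
  have orth: "\<And>j k. j \<in> J \<Longrightarrow> k \<in> J \<Longrightarrow> a j \<bullet> a k \<noteq> 0 \<Longrightarrow> \<alpha> j = \<alpha> k"
    using eig_orth[OF sym] eig by blast
  have "M * (v \<bullet> v) - v \<bullet> (A *v v) =
     (\<Sum>j\<in>J. \<Sum>k\<in>J. M * (c j * c k * (a j \<bullet> a k))) - (\<Sum>j\<in>J. \<Sum>k\<in>J. c j * (c k * \<alpha> k) * (a j \<bullet> a k))"
  proof -
    have Av: "A *v v = (\<Sum>j\<in>J. (c j * \<alpha> j) *\<^sub>R a j)" unfolding v by (rule mat_sum_eig[OF eig])
    show ?thesis unfolding Av unfolding v sum_inner_expand by (simp add: sum_distrib_left)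
  qed
  also have "\<dots> = (\<Sum>j\<in>J. \<Sum>k\<in>J. c j * c k * (\<lambda>t. M - t) (\<alpha> k) * (a j \<bullet> a k))"
    by (simp add: sum_subtractf[symmetric] algebra_simps)
  also have "\<dots> \<ge> 0" by (rule quad_nonneg[OF fin orth]) (use le in auto)
  finally show ?thesis by simp
qed

lemma ed_span:
  assumes "eigen_decomp (A::real^'n::finite^'n) \<alpha> a"
  shows "span (a ` {1..CARD('n)}) = UNIV"
proof -
  have ind: "independent (a ` {1..CARD('n)})" and inj: "inj_on a {1..CARD('n)}"
    using assms unfolding eigen_decomp_def by auto
  have "dim (UNIV :: (real^'n) set) \<le> card (a ` {1..CARD('n)})"
    using inj by (simp add: card_image)
  then have "UNIV \<subseteq> span (a ` {1..CARD('n)})"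
    by (intro card_ge_dim_independent[OF _ ind]) auto
  then show ?thesis by auto
qed

lemma ed_repr:
  assumes "eigen_decomp (A::real^'n::finite^'n) \<alpha> a"
  shows "\<exists>c. v = (\<Sum>j\<in>{1..CARD('n)}. c j *\<^sub>R a j)"
  using span_repr[of "{1..CARD('n)}" a v] ed_span[OF assms] assms unfolding eigen_decomp_def by auto

lemma exists_common:
  assumes "eigen_decomp (A::real^'n::finite^'n) \<alpha> a" "eigen_decomp (B::real^'n::finite^'n) \<beta> b"
    and k: "1 \<le> k" "k \<le> CARD('n)"
  shows "\<exists>v. v \<noteq> 0 \<and> v \<in> span (a ` {1..k}) \<and> v \<in> span (b ` {k..CARD('n)})"
proof -
  let ?n = "CARD('n)"
  have s1: "{1..k} \<subseteq> {1..?n}" and s2: "{k..?n} \<subseteq> {1..?n}" using k by auto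
  have inda: "independent (a ` {1..k})" and inja: "inj_on a {1..k}"
    using assms(1) independent_mono[OF _ image_mono[OF s1]] inj_on_subset[OF _ s1]
    unfolding eigen_decomp_def by auto
  have indb: "independent (b ` {k..?n})" and injb: "inj_on b {k..?n}"
    using assms(2) independent_mono[OF _ image_mono[OF s2]] inj_on_subset[OF _ s2]
    unfolding eigen_decomp_def by auto
  have dS: "dim (span (a ` {1..k})) = k"
    using dim_span_eq_card_independent[OF inda] inja by (simp add: card_image)
  have dT: "dim (span (b ` {k..?n})) = ?n + 1 - k"
    using dim_span_eq_card_independent[OF indb] injb by (simp add: card_image)
  have "dim {x + y |x y. x \<in> span (a ` {1..k}) \<and> y \<in> span (b ` {k..?n})} + dim (span (a ` {1..k}) \<inter> span (b ` {k..?n}))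
     = dim (span (a ` {1..k})) + dim (span (b ` {k..?n}))"
    by (intro dim_sums_Int subspace_span)
  moreover have "dim {x + y |x y. x \<in> span (a ` {1..k}) \<and> y \<in> span (b ` {k..?n})} \<le> ?n"
    using dim_subset_UNIV[where 'a="real^'n"] by simp
  ultimately have "dim (span (a ` {1..k}) \<inter> span (b ` {k..?n})) \<noteq> 0"
    using dS dT k by linarith
  then show ?thesis unfolding dim_eq_0 by blast
qed

lemma weyl:
  fixes A B :: "real^'n::finite^'n"
  assumes symA: "transpose A = A" and symB: "transpose B = B"
    and eA: "eigen_decomp A \<alpha> a" and eB: "eigen_decomp B \<beta> b"
    and cmp: "\<And>v. s * (v \<bullet> (A *v v)) \<le> t * (v \<bullet> (B *v v))"
    and st: "0 \<le> s" "0 \<le> t"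
    and k: "1 \<le> k" "k \<le> CARD('n)"
  shows "s * \<alpha> k \<le> t * \<beta> k"
proof -
  obtain v where v: "v \<noteq> 0" "v \<in> span (a ` {1..k})" "v \<in> span (b ` {k..CARD('n)})"
    using exists_common[OF eA eB k] by blast
  have s1: "{1..k} \<subseteq> {1..CARD('n)}" and s2: "{k..CARD('n)} \<subseteq> {1..CARD('n)}" using k by auto
  have inja: "inj_on a {1..k}" and injb: "inj_on b {k..CARD('n)}"
    using eA eB inj_on_subset[OF _ s1] inj_on_subset[OF _ s2] unfolding eigen_decomp_def by auto
  obtain c where c: "v = (\<Sum>j\<in>{1..k}. c j *\<^sub>R a j)" using span_repr[OF _ inja v(2)] by auto
  obtain d where d: "v = (\<Sum>j\<in>{k..CARD('n)}. d j *\<^sub>R b j)" using span_repr[OF _ injb v(3)] by auto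
  have "\<alpha> k * (v \<bullet> v) \<le> v \<bullet> (A *v v)"
    by (rule rayleigh_lower[OF symA _ _ _ c]) (use eA k in \<open>auto simp: eigen_decomp_def\<close>)
  moreover have "v \<bullet> (B *v v) \<le> \<beta> k * (v \<bullet> v)"
    by (rule rayleigh_upper[OF symB _ _ _ d]) (use eB k in \<open>auto simp: eigen_decomp_def\<close>)
  ultimately have "s * (\<alpha> k * (v \<bullet> v)) \<le> t * (\<beta> k * (v \<bullet> v))"
    using cmp[of v] st by (meson mult_left_mono order_trans)
  moreover have "v \<bullet> v > 0" using v(1) by simp
  ultimately show ?thesis by (simp add: mult.assoc[symmetric])
qed

lemma key:
  fixes L Lh :: "real^'n::finite^'n"
  assumes symLh: "transpose Lh = Lh" and edLh: "eigen_decomp Lh \<mu>h xh"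
    and i: "i \<in> {1..CARD('n)}"
    and Lx: "L *v x = m *\<^sub>R x" and x0: "x \<noteq> 0"
    and normE: "\<And>v. norm ((L - Lh) *v v) \<le> C * norm v" and C: "0 \<le> C"
    and G: "0 < G"
    and gapj: "\<And>j. j \<in> {1..CARD('n)} \<Longrightarrow> j \<noteq> i \<Longrightarrow> G\<^sup>2 \<le> (\<mu>h j - m)\<^sup>2"
    and mult: "(\<forall>j\<in>{1..CARD('n)}. j \<noteq> i \<longrightarrow> \<mu>h j \<noteq> \<mu>h i) \<or> G\<^sup>2 \<le> (\<mu>h i - m)\<^sup>2"
  shows "G * sin (vec_angle x (xh i)) \<le> C"
proof -
  let ?n = "CARD('n)"
  have eigh: "\<And>j. j \<in> {1..?n} \<Longrightarrow> Lh *v xh j = \<mu>h j *\<^sub>R xh j \<and> xh j \<noteq> 0"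
    using edLh unfolding eigen_decomp_def by auto
  have eigv: "\<And>j. j \<in> {1..?n} \<Longrightarrow> Lh *v xh j = \<mu>h j *\<^sub>R xh j" using eigh by blast
  have xhi: "xh i \<noteq> 0" and Lhh0: "Lh *v xh i = \<mu>h i *\<^sub>R xh i" using eigh[OF i] by auto
  define u where "u = (1 / norm x) *\<^sub>R x"
  define h where "h = (1 / norm (xh i)) *\<^sub>R xh i"
  define t where "t = u \<bullet> h"
  define q where "q = u - t *\<^sub>R h"
  have uu: "u \<bullet> u = 1" unfolding u_def using x0 by (simp add: power2_eq_square[symmetric] dot_square_norm)
  have hh: "h \<bullet> h = 1" unfolding h_def using xhi by (simp add: power2_eq_square[symmetric] dot_square_norm)
  have nu: "norm u = 1" unfolding u_def using x0 by simp
  have Lu: "L *v u = m *\<^sub>R u" unfolding u_def by (simp add: matrix_vector_mult_scaleR Lx)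
  have Lhh: "Lh *v h = \<mu>h i *\<^sub>R h" unfolding h_def by (simp add: matrix_vector_mult_scaleR Lhh0)
  have t_eq: "t = (x \<bullet> xh i) / (norm x * norm (xh i))" unfolding t_def u_def h_def by simp
  have tabs: "\<bar>t\<bar> \<le> 1"
    unfolding t_eq using Cauchy_Schwarz_ineq2[of x "xh i"] x0 xhi
    by (simp add: abs_div divide_le_eq_1)
  have qq: "q \<bullet> q = 1 - t\<^sup>2" unfolding q_def
    by (simp add: inner_diff_left inner_diff_right uu hh t_def inner_commute power2_eq_square)
  have qh: "q \<bullet> h = 0" unfolding q_def by (simp add: inner_diff_left hh t_def)
  have sin_eq: "sin (vec_angle x (xh i)) = norm q"
    unfolding vec_angle_def t_eq[symmetric] using tabs qq by (simp add: sin_arccos_abs norm_eq_sqrt_inner)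
  define r where "r = Lh *v u - m *\<^sub>R u"
  have r_eq: "r = - ((L - Lh) *v u)" unfolding r_def by (simp add: matrix_vector_mult_diff_rdistrib Lu)
  have nr: "norm r \<le> C" using normE[of u] nu r_eq by simp
  define y where "y = Lh *v q - m *\<^sub>R q"
  have ry: "r = y + (t * (\<mu>h i - m)) *\<^sub>R h"
    unfolding r_def y_def q_def by (simp add: matrix_vector_mult_diff_distrib matrix_vector_mult_scaleR Lhh algebra_simps)
  have hy: "h \<bullet> y = 0"
  proof -
    have "h \<bullet> (Lh *v q) = (Lh *v h) \<bullet> q" using symm_inner[OF symLh, of h q] by simp
    then show ?thesis unfolding y_def using qh by (simp add: inner_diff_right Lhh inner_commute)
  qed
  have "r \<bullet> r = y \<bullet> y + (t * (\<mu>h i - m))\<^sup>2"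
    unfolding ry using hy hh by (simp add: inner_add_left inner_add_right inner_commute power2_eq_square algebra_simps)
  moreover have "r \<bullet> r \<le> C\<^sup>2"
  proof -
    have "(norm r)\<^sup>2 \<le> C\<^sup>2" by (rule power_mono[OF nr norm_ge_zero])
    then show ?thesis by (simp only: power2_norm_eq_inner)
  qed
  ultimately have yy: "y \<bullet> y \<le> C\<^sup>2"
    by (smt (verit) zero_le_power2)
  obtain c where c: "q = (\<Sum>j\<in>{1..?n}. c j *\<^sub>R xh j)" using ed_repr[OF edLh] by blast
  have "G\<^sup>2 * (q \<bullet> q) \<le> y \<bullet> y"
  proof (cases "\<forall>j\<in>{1..CARD('n)}. j \<noteq> i \<longrightarrow> \<mu>h j \<noteq> \<mu>h i")
    case True
    have orth: "\<And>j. j \<in> {1..?n} - {i} \<Longrightarrow> xh j \<bullet> xh i = 0"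
      using True eigh i by (intro eig_orth[OF symLh]) auto
    have "q \<bullet> xh i = (\<Sum>j\<in>{1..?n}. c j * (xh j \<bullet> xh i))" unfolding c by (simp add: inner_sum_left)
    also have "\<dots> = c i * (xh i \<bullet> xh i) + (\<Sum>j\<in>{1..?n} - {i}. c j * (xh j \<bullet> xh i))"
      using i by (simp add: sum.remove)
    also have "\<dots> = c i * (xh i \<bullet> xh i)" using orth by simp
    finally have "c i * (xh i \<bullet> xh i) = 0"
      using qh unfolding h_def by (simp add: inner_commute)
    then have ci: "c i = 0" using xhi by simp
    have q2: "q = (\<Sum>j\<in>{1..?n} - {i}. c j *\<^sub>R xh j)"
      unfolding c using i ci by (simp add: sum.remove)
    show ?thesis unfolding y_def
      by (rule resid_lower[OF symLh _ _ _ q2, where \<alpha>=\<mu>h]) (simp_all add: eigv gapj)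
  next
    case False
    with mult have gi: "G\<^sup>2 \<le> (\<mu>h i - m)\<^sup>2" by blast
    show ?thesis unfolding y_def
    proof (rule resid_lower[OF symLh _ _ _ c, where \<alpha>=\<mu>h])
      fix j assume j: "j \<in> {1..?n}"
      show "G\<^sup>2 \<le> (\<mu>h j - m)\<^sup>2" 
      proof (cases "j = i")
        case True then show ?thesis using gi by simp
      next
        case False then show ?thesis using gapj[OF j] by blast
      qed
    qed (simp_all add: eigv)
  qed
  moreover have "(G * norm q)\<^sup>2 = G\<^sup>2 * (q \<bullet> q)"
    by (simp only: power_mult_distrib power2_norm_eq_inner)
  ultimately have "(G * norm q)\<^sup>2 \<le> C\<^sup>2" using yy by linarith
  then have "G * norm q \<le> C" using C by (rule power2_le_imp_le)
  then show ?thesis using sin_eq by simp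
qed


lemma sin_angle_bounds:
  fixes x y :: "'a::real_inner"
  assumes "x \<noteq> 0" "y \<noteq> 0"
  shows "0 \<le> sin (vec_angle x y) \<and> sin (vec_angle x y) \<le> 1"
proof -
  define t where "t = (x \<bullet> y) / (norm x * norm y)"
  have "\<bar>t\<bar> \<le> 1"
    unfolding t_def using Cauchy_Schwarz_ineq2[of x y] assms
    by (simp add: abs_div divide_le_eq_1)
  then have "sin (vec_angle x y) = sqrt (1 - t\<^sup>2)"
    unfolding vec_angle_def t_def[symmetric] by (auto simp: sin_arccos_abs)
  moreover have "t\<^sup>2 \<le> 1" using \<open>\<bar>t\<bar> \<le> 1\<close> by (simp add: abs_square_le_1)
  ultimately show ?thesis by simp
qed

lemma lap_sym:
  assumes "weighted_graph w"
  shows "transpose (laplacian w) = laplacian w"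
  using assms unfolding transpose_def laplacian_def deg_matrix_def adj_matrix_def weighted_graph_def
  by (auto simp: vec_eq_iff)

lemma transpose_minus:
  fixes A B :: "real^'n::finite^'m::finite"
  shows "transpose (A - B) = transpose A - transpose B"
  by (simp add: transpose_def vec_eq_iff)

lemma eigval_in:
  fixes A :: "real^'n::finite^'n"
  assumes sym: "transpose A = A" and ed: "eigen_decomp A \<alpha> a" and ev: "is_eigenvalue A c"
  shows "\<exists>j\<in>{1..CARD('n)}. c = \<alpha> j"
proof (rule ccontr)
  assume ne: "\<not> (\<exists>j\<in>{1..CARD('n)}. c = \<alpha> j)"
  obtain v where v: "v \<noteq> 0" "A *v v = c *\<^sub>R v" using ev unfolding is_eigenvalue_def by blast
  obtain d where d: "v = (\<Sum>j\<in>{1..CARD('n)}. d j *\<^sub>R a j)" using ed_repr[OF ed] by blast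
  have orth: "\<And>j. j \<in> {1..CARD('n)} \<Longrightarrow> a j \<bullet> v = 0"
  proof -
    fix j assume j: "j \<in> {1..CARD('n)}"
    have "A *v a j = \<alpha> j *\<^sub>R a j" using ed j unfolding eigen_decomp_def by auto
    moreover have "\<alpha> j \<noteq> c" using ne j by auto
    ultimately show "a j \<bullet> v = 0" using eig_orth[OF sym _ v(2)] by blast
  qed
  have "v \<bullet> v = (\<Sum>j\<in>{1..CARD('n)}. d j * (a j \<bullet> v))"
    by (subst (1) d) (simp add: inner_sum_left)
  also have "\<dots> = 0" using orth by simp
  finally show False using v(1) by simp
qed

lemma rho_ge:
  fixes A :: "real^'n::finite^'n"
  assumes sym: "transpose A = A" and ed: "eigen_decomp A \<alpha> a" and j: "j \<in> {1..CARD('n)}"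
  shows "\<bar>\<alpha> j\<bar> \<le> spec_radius A"
proof -
  have sub: "{\<bar>c\<bar> | c. is_eigenvalue A c} \<subseteq> (\<lambda>j. \<bar>\<alpha> j\<bar>) ` {1..CARD('n)}"
    using eigval_in[OF sym ed] by blast
  have fin: "finite {\<bar>c\<bar> | c. is_eigenvalue A c}" by (rule finite_subset[OF sub]) simp
  have "is_eigenvalue A (\<alpha> j)" using ed j unfolding eigen_decomp_def is_eigenvalue_def by auto
  then have "\<bar>\<alpha> j\<bar> \<in> {\<bar>c\<bar> | c. is_eigenvalue A c}" by blast
  then show ?thesis unfolding spec_radius_def using fin by (simp add: Max_ge)
qed

lemma polar:
  fixes E :: "real^'n::finite^'n"
  assumes sym: "transpose E = E" and q: "\<And>v. \<bar>v \<bullet> (E *v v)\<bar> \<le> C * (v \<bullet> v)"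
  shows "norm (E *v x) \<le> C * norm x"
proof -
  have pol: "4 * (z \<bullet> (E *v y)) \<le> 2 * C * (y \<bullet> y + z \<bullet> z)" for y z
  proof -
    have s: "y \<bullet> (E *v z) = z \<bullet> (E *v y)"
      using symm_inner[OF sym, of y z] by (simp add: inner_commute)
    have e: "4 * (z \<bullet> (E *v y)) = (y + z) \<bullet> (E *v (y + z)) - (y - z) \<bullet> (E *v (y - z))"
      by (simp add: matrix_vector_right_distrib matrix_vector_mult_diff_distrib inner_add_left inner_add_right
          inner_diff_left inner_diff_right s)
    have "(y + z) \<bullet> (E *v (y + z)) \<le> C * ((y + z) \<bullet> (y + z))" using q[of "y + z"] by linarith
    moreover have "- ((y - z) \<bullet> (E *v (y - z))) \<le> C * ((y - z) \<bullet> (y - z))" using q[of "y - z"] by linarith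
    moreover have "C * ((y + z) \<bullet> (y + z)) + C * ((y - z) \<bullet> (y - z)) = 2 * C * (y \<bullet> y + z \<bullet> z)"
      by (simp add: inner_add_left inner_add_right inner_diff_left inner_diff_right inner_commute algebra_simps)
    ultimately show ?thesis using e by linarith
  qed
  show ?thesis
  proof (cases "x = 0 \<or> E *v x = 0")
    case True
    show ?thesis
    proof (cases "x = 0")
      case True then show ?thesis by simp
    next
      case False
      have "0 \<le> C * (x \<bullet> x)" using q[of x] by linarith
      moreover have "0 < x \<bullet> x" using False by simp
      ultimately have "0 \<le> C" by (simp add: zero_le_mult_iff)
      then show ?thesis using \<open>x = 0 \<or> E *v x = 0\<close> False by simp
    qed
  next
    case False
    then have x0: "x \<noteq> 0" and ex0: "E *v x \<noteq> 0" by auto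
    define z where "z = (norm x / norm (E *v x)) *\<^sub>R (E *v x)"
    have zz: "z \<bullet> z = x \<bullet> x" unfolding z_def using ex0
      by (simp add: power2_norm_eq_inner[symmetric] power_divide)
    have zE: "z \<bullet> (E *v x) = norm x * norm (E *v x)" unfolding z_def using ex0
      by (simp add: power2_norm_eq_inner[symmetric] power2_eq_square)
    have "4 * (norm x * norm (E *v x)) \<le> 2 * C * (2 * (x \<bullet> x))" using pol[of z x] zz zE by simp
    then have "norm x * norm (E *v x) \<le> C * (norm x * norm x)"
      by (simp add: power2_norm_eq_inner[symmetric] power2_eq_square)
    then have "norm x * norm (E *v x) \<le> norm x * (C * norm x)" by (simp add: mult_ac)
    then show ?thesis using x0 by simp
  qed
qed

lemma sq_le: "0 \<le> (a::real) \<Longrightarrow> a \<le> \<bar>b\<bar> \<Longrightarrow> a\<^sup>2 \<le> b\<^sup>2"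
  by (metis power2_abs power_mono)

theorem lemma1:
  fixes w wh :: "'n::finite \<Rightarrow> 'n \<Rightarrow> real"
    and \<epsilon> :: real
    and \<mu> \<mu>h :: "nat \<Rightarrow> real"
    and x xh :: "nat \<Rightarrow> real^'n"
  assumes "weighted_graph w"
    and "0 < \<epsilon>" and "\<epsilon> < 1"
    and "spectral_sparsifier \<epsilon> w wh"
    and "eigen_decomp (laplacian w) \<mu> x"
    and "eigen_decomp (laplacian wh) \<mu>h xh"
    and "\<forall>i\<in>{1..CARD('n)}.
           \<bar>ereal (\<mu> i) - ext_eig CARD('n) \<mu>h (i - 1)\<bar> \<noteq> 0 \<and>
           \<bar>ereal (\<mu> i) - ext_eig CARD('n) \<mu>h (i + 1)\<bar> \<noteq> 0"
  shows "spec_norm (laplacian w - laplacian wh) \<le> \<epsilon> * spec_radius (laplacian w) \<and>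
    (\<forall>i\<in>{1..CARD('n)}.
           ereal (sin (vec_angle (x i) (xh i))) \<le>
             ereal (\<epsilon> * spec_radius (laplacian w)) /
             min \<bar>ereal (\<mu> i) - ext_eig CARD('n) \<mu>h (i - 1)\<bar>
                 \<bar>ereal (\<mu> i) - ext_eig CARD('n) \<mu>h (i + 1)\<bar>)"
proof -
  let ?n = "CARD('n)"
  let ?L = "laplacian w"
  let ?Lh = "laplacian wh"
  let ?\<rho> = "spec_radius ?L"
  let ?E = "?L - ?Lh"
  have symL: "transpose ?L = ?L" using lap_sym[OF assms(1)] .
  have symLh: "transpose ?Lh = ?Lh"
    using lap_sym assms(4) unfolding spectral_sparsifier_def by blast
  have sp1: "\<And>v. (1 - \<epsilon>) * (v \<bullet> (?L *v v)) \<le> v \<bullet> (?Lh *v v)"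
    and sp2: "\<And>v. v \<bullet> (?Lh *v v) \<le> (1 + \<epsilon>) * (v \<bullet> (?L *v v))"
    using assms(4) unfolding spectral_sparsifier_def by auto
  note edL = assms(5) and edLh = assms(6)
  have eigL: "\<And>j. j \<in> {1..?n} \<Longrightarrow> ?L *v x j = \<mu> j *\<^sub>R x j \<and> x j \<noteq> 0"
    using edL unfolding eigen_decomp_def by auto
  have eigLh: "\<And>j. j \<in> {1..?n} \<Longrightarrow> ?Lh *v xh j = \<mu>h j *\<^sub>R xh j \<and> xh j \<noteq> 0"
    using edLh unfolding eigen_decomp_def by auto
  have ordL: "\<And>i j. 1 \<le> i \<Longrightarrow> i \<le> j \<Longrightarrow> j \<le> ?n \<Longrightarrow> \<mu> j \<le> \<mu> i"
    using edL unfolding eigen_decomp_def by auto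
  have ordLh: "\<And>i j. 1 \<le> i \<Longrightarrow> i \<le> j \<Longrightarrow> j \<le> ?n \<Longrightarrow> \<mu>h j \<le> \<mu>h i"
    using edLh unfolding eigen_decomp_def by auto
  have n1: "1 \<le> ?n" by (simp add: Suc_leI)
  have murho: "\<And>j. j \<in> {1..?n} \<Longrightarrow> \<bar>\<mu> j\<bar> \<le> ?\<rho>" using rho_ge[OF symL edL] by blast
  have rho0: "0 \<le> ?\<rho>" using murho[of 1] n1 by force
  have quadL: "v \<bullet> (?L *v v) \<le> ?\<rho> * (v \<bullet> v)" for v
  proof -
    obtain c where c: "v = (\<Sum>j\<in>{1..?n}. c j *\<^sub>R x j)" using ed_repr[OF edL] by blast
    show ?thesis
    proof (rule rayleigh_upper[OF symL _ _ _ c, where \<alpha>=\<mu>])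
      fix j assume "j \<in> {1..?n}"
      then show "\<mu> j \<le> ?\<rho>" using murho by force
    qed (use eigL in simp_all)
  qed
  have symE: "transpose ?E = ?E" using symL symLh by (simp add: transpose_minus)
  have quadE: "\<bar>v \<bullet> (?E *v v)\<bar> \<le> (\<epsilon> * ?\<rho>) * (v \<bullet> v)" for v
  proof -
    have e: "v \<bullet> (?E *v v) = v \<bullet> (?L *v v) - v \<bullet> (?Lh *v v)"
      by (simp add: matrix_vector_mult_diff_rdistrib inner_diff_right)
    have "\<epsilon> * (v \<bullet> (?L *v v)) \<le> \<epsilon> * (?\<rho> * (v \<bullet> v))"
      using quadL[of v] assms(2) by (simp add: mult_left_mono)
    then show ?thesis unfolding e using sp1[of v] sp2[of v] by (simp add: algebra_simps abs_le_iff)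
  qed
  have normE: "\<And>v. norm (?E *v v) \<le> (\<epsilon> * ?\<rho>) * norm v"
    by (rule polar[OF symE]) (rule quadE)
  have part1: "spec_norm ?E \<le> \<epsilon> * ?\<rho>"
    unfolding spec_norm_def by (rule onorm_le) (rule normE)
  have Cpos: "0 \<le> \<epsilon> * ?\<rho>" using assms(2) rho0 by simp
  have weyl_lo: "\<And>k. k \<in> {1..?n} \<Longrightarrow> (1 - \<epsilon>) * \<mu> k \<le> \<mu>h k"
  proof -
    fix k assume k: "k \<in> {1..?n}"
    have "(1 - \<epsilon>) * \<mu> k \<le> 1 * \<mu>h k"
      by (rule weyl[OF symL symLh edL edLh]) (use sp1 assms(3) k in auto)
    then show "(1 - \<epsilon>) * \<mu> k \<le> \<mu>h k" by simp
  qed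
  have weyl_hi: "\<And>k. k \<in> {1..?n} \<Longrightarrow> \<mu>h k \<le> (1 + \<epsilon>) * \<mu> k"
  proof -
    fix k assume k: "k \<in> {1..?n}"
    have "1 * \<mu>h k \<le> (1 + \<epsilon>) * \<mu> k"
      by (rule weyl[OF symLh symL edLh edL]) (use sp2 assms(2) k in auto)
    then show "\<mu>h k \<le> (1 + \<epsilon>) * \<mu> k" by simp
  qed
  have part2: "ereal (sin (vec_angle (x i) (xh i))) \<le>
             ereal (\<epsilon> * ?\<rho>) /
             min \<bar>ereal (\<mu> i) - ext_eig ?n \<mu>h (i - 1)\<bar>
                 \<bar>ereal (\<mu> i) - ext_eig ?n \<mu>h (i + 1)\<bar>" if i: "i \<in> {1..?n}" for i
  proof -
    let ?s = "sin (vec_angle (x i) (xh i))"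
    define D1 where "D1 = \<bar>ereal (\<mu> i) - ext_eig ?n \<mu>h (i - 1)\<bar>"
    define D2 where "D2 = \<bar>ereal (\<mu> i) - ext_eig ?n \<mu>h (i + 1)\<bar>"
    have D1ne: "D1 \<noteq> 0" and D2ne: "D2 \<noteq> 0" using assms(7) i unfolding D1_def D2_def by auto
    have sb: "0 \<le> ?s" "?s \<le> 1" using sin_angle_bounds[of "x i" "xh i"] eigL[OF i] eigLh[OF i] by auto
    have keyi: "G * ?s \<le> \<epsilon> * ?\<rho>"
      if G: "0 < G" and gj: "\<And>j. j \<in> {1..?n} \<Longrightarrow> j \<noteq> i \<Longrightarrow> G\<^sup>2 \<le> (\<mu>h j - \<mu> i)\<^sup>2"
        and ml: "(\<forall>j\<in>{1..?n}. j \<noteq> i \<longrightarrow> \<mu>h j \<noteq> \<mu>h i) \<or> G\<^sup>2 \<le> (\<mu>h i - \<mu> i)\<^sup>2" for G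
      by (rule key[OF symLh edLh i _ _ normE Cpos G gj ml]) (use eigL[OF i] in auto)
    have "ereal ?s \<le> ereal (\<epsilon> * ?\<rho>) / min D1 D2"
    proof (cases "?n = 1")
      case True
      then have i1: "i = 1" using i by auto
      have "D1 = \<infinity>" unfolding D1_def using i1 by (simp add: ext_eig_def)
      moreover have "D2 = \<infinity>" unfolding D2_def using i1 True by (simp add: ext_eig_def)
      moreover have "?s \<le> 0"
      proof (rule ccontr)
        assume "\<not> ?s \<le> 0"
        then have sp: "0 < ?s" by simp
        define G where "G = (\<epsilon> * ?\<rho> + 1) / ?s"
        have "G * ?s \<le> \<epsilon> * ?\<rho>"
          by (rule keyi) (use sp Cpos True i1 in \<open>auto simp: G_def\<close>)
        moreover have "G * ?s = \<epsilon> * ?\<rho> + 1" using sp by (simp add: G_def)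
        ultimately show False by simp
      qed
      ultimately show ?thesis by simp
    next
      case False
      then have n2: "2 \<le> ?n" using n1 by linarith
      have D1a: "i = 1 \<Longrightarrow> D1 = \<infinity>" unfolding D1_def by (simp add: ext_eig_def)
      have D1b: "2 \<le> i \<Longrightarrow> D1 = ereal \<bar>\<mu> i - \<mu>h (i - 1)\<bar>" unfolding D1_def using i by (simp add: ext_eig_def)
      have D2a: "i = ?n \<Longrightarrow> D2 = \<infinity>" unfolding D2_def by (simp add: ext_eig_def)
      have D2b: "i < ?n \<Longrightarrow> D2 = ereal \<bar>\<mu> i - \<mu>h (i + 1)\<bar>" unfolding D2_def using i by (simp add: ext_eig_def)
      obtain gr where gr: "min D1 D2 = ereal gr" "0 < gr"
        and g1: "2 \<le> i \<Longrightarrow> gr \<le> \<bar>\<mu> i - \<mu>h (i - 1)\<bar>"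
        and g2: "i < ?n \<Longrightarrow> gr \<le> \<bar>\<mu> i - \<mu>h (i + 1)\<bar>"
      proof (cases "i = 1")
        case True
        then have "i < ?n" using n2 by simp
        show ?thesis
          by (rule that[of "\<bar>\<mu> i - \<mu>h (i + 1)\<bar>"]) (use True D1a D2b[OF \<open>i < ?n\<close>] D2ne in auto)
      next
        case False
        then have i2: "2 \<le> i" using i by auto
        show ?thesis
        proof (cases "i = ?n")
          case True
          show ?thesis
            by (rule that[of "\<bar>\<mu> i - \<mu>h (i - 1)\<bar>"]) (use True D2a D1b[OF i2] D1ne in auto)
        next
          case False
          then have "i < ?n" using i by auto
          show ?thesis
            by (rule that[of "min \<bar>\<mu> i - \<mu>h (i - 1)\<bar> \<bar>\<mu> i - \<mu>h (i + 1)\<bar>"])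
              (use \<open>i < ?n\<close> i2 D1b[OF i2] D2b[OF \<open>i < ?n\<close>] D1ne D2ne in auto)
        qed
      qed
      have "gr * ?s \<le> \<epsilon> * ?\<rho>"
      proof (cases "gr \<le> \<epsilon> * ?\<rho>")
        case True
        have "gr * ?s \<le> gr * 1" using sb gr(2) by (intro mult_left_mono) auto
        then show ?thesis using True by simp
      next
        case False
        then have big: "\<epsilon> * ?\<rho> < gr" by simp
        have I1: "\<mu> i \<le> \<mu>h (i - 1)" if i2: "2 \<le> i"
        proof (rule ccontr)
          assume "\<not> \<mu> i \<le> \<mu>h (i - 1)"
          then have lt: "\<mu>h (i - 1) < \<mu> i" by simp
          have im: "i - 1 \<in> {1..?n}" using i i2 by auto
          have a1: "(1 - \<epsilon>) * \<mu> (i - 1) \<le> \<mu>h (i - 1)" using weyl_lo[OF im] .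
          have a2: "(1 - \<epsilon>) * \<mu> i \<le> (1 - \<epsilon>) * \<mu> (i - 1)"
            using ordL[of "i - 1" i] i i2 assms(3) by (intro mult_left_mono) auto
          have a3: "\<epsilon> * \<mu> i \<le> \<epsilon> * ?\<rho>" using murho[OF i] assms(2) by (intro mult_left_mono) auto
          have "gr \<le> \<mu> i - \<mu>h (i - 1)" using g1[OF i2] lt by simp
          then show False using a1 a2 a3 big by (simp add: algebra_simps)
        qed
        have I2: "\<mu>h (i + 1) \<le> \<mu> i" if i3: "i < ?n"
        proof (rule ccontr)
          assume "\<not> \<mu>h (i + 1) \<le> \<mu> i"
          then have lt: "\<mu> i < \<mu>h (i + 1)" by simp
          have ip: "i + 1 \<in> {1..?n}" using i i3 by auto
          have a1: "\<mu>h (i + 1) \<le> (1 + \<epsilon>) * \<mu> (i + 1)" using weyl_hi[OF ip] .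
          have a2: "\<mu> (i + 1) \<le> \<mu> i" using ordL[of i "i + 1"] i i3 by auto
          have a3: "\<epsilon> * \<mu> (i + 1) \<le> \<epsilon> * ?\<rho>" using murho[OF ip] assms(2) by (intro mult_left_mono) auto
          have "gr \<le> \<mu>h (i + 1) - \<mu> i" using g2[OF i3] lt by simp
          then show False using a1 a2 a3 big by (simp add: algebra_simps)
        qed
        have gapabs: "gr \<le> \<bar>\<mu>h j - \<mu> i\<bar>" if j: "j \<in> {1..?n}" "j \<noteq> i" for j
        proof (cases "j < i")
          case True
          then have i2: "2 \<le> i" using j by auto
          have "\<mu>h (i - 1) \<le> \<mu>h j" using ordLh[of j "i - 1"] j True i by auto
          then show ?thesis using I1[OF i2] g1[OF i2] by simp
        next
          case False
          then have i3: "i < ?n" and ji: "i + 1 \<le> j" using j by auto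
          have "\<mu>h j \<le> \<mu>h (i + 1)" using ordLh[of "i + 1" j] j ji by auto
          then show ?thesis using I2[OF i3] g2[OF i3] by simp
        qed
        show ?thesis
        proof (rule keyi[OF gr(2)])
          fix j assume "j \<in> {1..?n}" "j \<noteq> i"
          then show "gr\<^sup>2 \<le> (\<mu>h j - \<mu> i)\<^sup>2" using gapabs gr(2) by (intro sq_le) auto
        next
          show "(\<forall>j\<in>{1..?n}. j \<noteq> i \<longrightarrow> \<mu>h j \<noteq> \<mu>h i) \<or> gr\<^sup>2 \<le> (\<mu>h i - \<mu> i)\<^sup>2"
          proof (cases "\<forall>j\<in>{1..?n}. j \<noteq> i \<longrightarrow> \<mu>h j \<noteq> \<mu>h i")
            case False
            then obtain j where j: "j \<in> {1..?n}" "j \<noteq> i" "\<mu>h j = \<mu>h i" by blast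
            have "gr \<le> \<bar>\<mu>h i - \<mu> i\<bar>" using gapabs[OF j(1,2)] j(3) by simp
            then have "gr\<^sup>2 \<le> (\<mu>h i - \<mu> i)\<^sup>2" using gr(2) by (intro sq_le) auto
            then show ?thesis by blast
          qed blast
        qed
      qed
      then have "?s \<le> \<epsilon> * ?\<rho> / gr" using gr(2) by (simp add: pos_le_divide_eq mult.commute)
      then show ?thesis using gr(1,2) by simp
    qed
    then show ?thesis unfolding D1_def D2_def .
  qed
  show ?thesis using part1 part2 by blast
qed

end
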